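(* Fix linearly independent $f,g,h\in S_1\oplus S_2$. Then $\dim\big(\pi_{1,2}P_\xi(S_3)+[f,g,h]\big)=5$ for almost every $\xi\in\mathbb{R}^2$.
   Context: For $j\ge0$, $S_j$ is the real vector space of homogeneous polynomials of degree $j$ in $r,s$; $[\cdot]$ denotes linear span. For $\xi=(a,b)\in\mathbb{R}^2$ and a polynomial $f$, $P_\xi f(r,s)=f(\xi)+\partial_rf(\xi)(r-a)+\partial_sf(\xi)(s-b)+\frac12\partial_{rr}f(\xi)(r-a)^2+\partial_{rs}f(\xi)(r-a)(s-b)+\frac12\partial_{ss}f(\xi)(s-b)^2$ (second-order Taylor polynomial at $\xi$), an element of $S_0\oplus S_1\oplus S_2$. $\pi_{1,2}$ is the projection of $S_0\oplus S_1\oplus S_2$ onto $S_1\oplus S_2$ along $S_0$. *)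

theory Defs
  imports "HOL-Analysis.Analysis" "HOL-Library.Function_Algebras" "HOL-Library.Set_Algebras"
begin

text \<open>Polynomials in r,s are represented as real functions on real \<times> real;
  the real vector space structure is pointwise (addition from Function_Algebras,
  scalar multiplication fscale).\<close>

definition fscale :: "real \<Rightarrow> (real \<times> real \<Rightarrow> real) \<Rightarrow> (real \<times> real \<Rightarrow> real)" where
  "fscale c p = (\<lambda>x. c * p x)"

definition S :: "nat \<Rightarrow> (real \<times> real \<Rightarrow> real) set" where
  "S j = {p. \<exists>c :: nat \<Rightarrow> real. p = (\<lambda>(r,s). \<Sum>i\<le>j. c i * r ^ i * s ^ (j - i))}"

definition S12 :: "(real \<times> real \<Rightarrow> real) set" where
  "S12 = {p + q | p q. p \<in> S 1 \<and> q \<in> S 2}"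

definition pdr :: "(real \<times> real \<Rightarrow> real) \<Rightarrow> real \<times> real \<Rightarrow> real" where
  "pdr p = (\<lambda>(a,b). deriv (\<lambda>t. p (t,b)) a)"

definition pds :: "(real \<times> real \<Rightarrow> real) \<Rightarrow> real \<times> real \<Rightarrow> real" where
  "pds p = (\<lambda>(a,b). deriv (\<lambda>t. p (a,t)) b)"

definition taylor2 :: "real \<times> real \<Rightarrow> (real \<times> real \<Rightarrow> real) \<Rightarrow> (real \<times> real \<Rightarrow> real)" where
  "taylor2 \<xi> p = (\<lambda>(r,s). p \<xi> + pdr p \<xi> * (r - fst \<xi>) + pds p \<xi> * (s - snd \<xi>)
      + 1/2 * pdr (pdr p) \<xi> * (r - fst \<xi>)^2
      + pds (pdr p) \<xi> * (r - fst \<xi>) * (s - snd \<xi>)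
      + 1/2 * pds (pds p) \<xi> * (s - snd \<xi>)^2)"

text \<open>Projection of S0+S1+S2 onto S1+S2 along S0 (remove the constant term).\<close>
definition pi12 :: "(real \<times> real \<Rightarrow> real) \<Rightarrow> (real \<times> real \<Rightarrow> real)" where
  "pi12 p = (\<lambda>x. p x - p (0,0))"

end

theory Submission
  imports Defs "HOL-Computational_Algebra.Polynomial"
begin


lemma vs_fscale: "vector_space fscale"
  by unfold_locales (auto simp: fscale_def algebra_simps fun_eq_iff)

interpretation F: vector_space fscale by (rule vs_fscale)

definition poly5 :: "real \<Rightarrow> real \<Rightarrow> real \<Rightarrow> real \<Rightarrow> real \<Rightarrow> real \<times> real \<Rightarrow> real" where
  "poly5 k1 k2 k3 k4 k5 = (\<lambda>(u,v). k1 * u + k2 * v + k3 * u^2 + k4 * u * v + k5 * v^2)"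

definition cub :: "real \<Rightarrow> real \<Rightarrow> real \<Rightarrow> real \<Rightarrow> real \<times> real \<Rightarrow> real" where
  "cub c0 c1 c2 c3 = (\<lambda>(u,v). c0 * v^3 + c1 * u * v^2 + c2 * u^2 * v + c3 * u^3)"

lemma S3_eq: "S 3 = {cub c0 c1 c2 c3 | c0 c1 c2 c3. True}"
proof -
  have e: "(\<Sum>i\<le>3. c i * u ^ i * v ^ (3 - i)) = c 0 * v^3 + c 1 * u * v^2 + c 2 * u^2 * v + c 3 * u^3" for c :: "nat \<Rightarrow> real" and u v :: real
    by (simp add: eval_nat_numeral algebra_simps)
  show ?thesis
  proof (auto simp: S_def)
    fix c :: "nat \<Rightarrow> real"
    show "\<exists>c0 c1 c2 c3. (\<lambda>(u, v). \<Sum>i\<le>3. c i * u ^ i * v ^ (3 - i)) = cub c0 c1 c2 c3"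
      by (rule exI[of _ "c 0"], rule exI[of _ "c 1"], rule exI[of _ "c 2"], rule exI[of _ "c 3"])
         (simp add: cub_def e)
  next
    fix c0 c1 c2 c3
    show "\<exists>c. cub c0 c1 c2 c3 = (\<lambda>(u, v). \<Sum>i\<le>3. c i * u ^ i * v ^ (3 - i))"
      by (rule exI[of _ "\<lambda>i. if i = 0 then c0 else if i = 1 then c1 else if i = 2 then c2 else c3"])
         (simp add: cub_def e)
  qed
qed

lemma S12_sub: "S12 \<subseteq> {poly5 k1 k2 k3 k4 k5 | k1 k2 k3 k4 k5. True}"
proof
  fix p assume "p \<in> S12"
  then obtain c d :: "nat \<Rightarrow> real" where p: "p = (\<lambda>(u,v). \<Sum>i\<le>1. c i * u ^ i * v ^ (1 - i)) + (\<lambda>(u,v). \<Sum>i\<le>2. d i * u ^ i * v ^ (2 - i))"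
    by (auto simp: S12_def S_def)
  have "p = poly5 (c 1) (c 0) (d 2) (d 1) (d 0)"
    by (auto simp: p poly5_def fun_eq_iff eval_nat_numeral algebra_simps)
  then show "p \<in> {poly5 k1 k2 k3 k4 k5 | k1 k2 k3 k4 k5. True}" by blast
qed

lemma deriv_cub_r: "pdr (cub c0 c1 c2 c3) = (\<lambda>(a,b). 3 * c3 * a^2 + 2 * c2 * a * b + c1 * b^2)"
proof -
  have "deriv (\<lambda>t. cub c0 c1 c2 c3 (t,b)) a = 3 * c3 * a^2 + 2 * c2 * a * b + c1 * b^2" for a b
    by (rule DERIV_imp_deriv) (auto simp: cub_def intro!: derivative_eq_intros simp: algebra_simps power2_eq_square)
  then show ?thesis by (auto simp: pdr_def fun_eq_iff)
qed

lemma deriv_cub_s: "pds (cub c0 c1 c2 c3) = (\<lambda>(a,b). 3 * c0 * b^2 + 2 * c1 * a * b + c2 * a^2)"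
proof -
  have "deriv (\<lambda>t. cub c0 c1 c2 c3 (a,t)) b = 3 * c0 * b^2 + 2 * c1 * a * b + c2 * a^2" for a b
    by (rule DERIV_imp_deriv) (auto simp: cub_def intro!: derivative_eq_intros simp: algebra_simps power2_eq_square)
  then show ?thesis by (auto simp: pds_def fun_eq_iff)
qed

lemma d_rr: "pdr (pdr (cub c0 c1 c2 c3)) (a,b) = 6 * c3 * a + 2 * c2 * b"
  apply (subst deriv_cub_r) apply (subst pdr_def)
  by (simp, rule DERIV_imp_deriv) (auto intro!: derivative_eq_intros simp: algebra_simps power2_eq_square)

lemma d_rs: "pds (pdr (cub c0 c1 c2 c3)) (a,b) = 2 * c2 * a + 2 * c1 * b"
  apply (subst deriv_cub_r) apply (subst pds_def)
  by (simp, rule DERIV_imp_deriv) (auto intro!: derivative_eq_intros simp: algebra_simps power2_eq_square)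

lemma d_ss: "pds (pds (cub c0 c1 c2 c3)) (a,b) = 6 * c0 * b + 2 * c1 * a"
  apply (subst deriv_cub_s) apply (subst pds_def)
  by (simp, rule DERIV_imp_deriv) (auto intro!: derivative_eq_intros simp: algebra_simps power2_eq_square)

lemma pi_taylor_cub: "pi12 (taylor2 (x,y) (cub c0 c1 c2 c3)) =
  poly5 (- 3 * x^2 * c3 - 2 * x * y * c2 - y^2 * c1) (- (x^2) * c2 - 2 * x * y * c1 - 3 * y^2 * c0)
        (3 * x * c3 + y * c2) (2 * x * c2 + 2 * y * c1) (x * c1 + 3 * y * c0)"
proof -
  have r: "pdr (cub c0 c1 c2 c3) (a,b) = 3 * c3 * a^2 + 2 * c2 * a * b + c1 * b^2" for a b
    by (simp add: deriv_cub_r)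
  have s: "pds (cub c0 c1 c2 c3) (a,b) = 3 * c0 * b^2 + 2 * c1 * a * b + c2 * a^2" for a b
    by (simp add: deriv_cub_s)
  show ?thesis
  unfolding pi12_def taylor2_def poly5_def fst_conv snd_conv d_rr d_rs d_ss r s
  by (auto simp: fun_eq_iff cub_def algebra_simps power2_eq_square power3_eq_cube)
qed

definition Q :: "(real \<times> real \<Rightarrow> real) set" where
  "Q = {poly5 k1 k2 k3 k4 k5 | k1 k2 k3 k4 k5. True}"

lemma poly5_add: "poly5 a1 a2 a3 a4 a5 + poly5 b1 b2 b3 b4 b5 = poly5 (a1+b1) (a2+b2) (a3+b3) (a4+b4) (a5+b5)"
  by (auto simp: poly5_def fun_eq_iff algebra_simps)

lemma poly5_scale: "fscale c (poly5 a1 a2 a3 a4 a5) = poly5 (c * a1) (c * a2) (c * a3) (c * a4) (c * a5)"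
  by (auto simp: poly5_def fscale_def fun_eq_iff algebra_simps)

lemma poly5_zero: "(0 :: real \<times> real \<Rightarrow> real) = poly5 0 0 0 0 0"
  by (auto simp: poly5_def fun_eq_iff)

lemma poly5_inj:
  assumes "poly5 a1 a2 a3 a4 a5 = poly5 b1 b2 b3 b4 b5"
  shows "a1 = b1 \<and> a2 = b2 \<and> a3 = b3 \<and> a4 = b4 \<and> a5 = b5"
proof -
  have e: "a1 * u + a2 * v + a3 * u^2 + a4 * u * v + a5 * v^2 = b1 * u + b2 * v + b3 * u^2 + b4 * u * v + b5 * v^2" for u v
    using fun_cong[OF assms, of "(u,v)"] by (simp add: poly5_def)
  from e[of 1 0] e[of "-1" 0] e[of 0 1] e[of 0 "-1"] e[of 1 1] show ?thesis by auto
qed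

lemma subspace_Q: "F.subspace Q"
  unfolding F.subspace_def Q_def
  by (auto simp: poly5_add poly5_scale poly5_zero[symmetric]) (metis poly5_zero)+

definition B5 where "B5 = {poly5 1 0 0 0 0, poly5 0 1 0 0 0, poly5 0 0 1 0 0, poly5 0 0 0 1 0, poly5 0 0 0 0 1}"

lemma span_B5: "F.span B5 = Q"
proof
  show "F.span B5 \<subseteq> Q" by (rule F.span_minimal) (use subspace_Q in \<open>auto simp: B5_def Q_def; blast\<close>)+
  show "Q \<subseteq> F.span B5"
  proof
    fix p assume "p \<in> Q"
    then obtain k1 k2 k3 k4 k5 where p: "p = poly5 k1 k2 k3 k4 k5" by (auto simp: Q_def)
    have "p = fscale k1 (poly5 1 0 0 0 0) + fscale k2 (poly5 0 1 0 0 0) + fscale k3 (poly5 0 0 1 0 0)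
      + fscale k4 (poly5 0 0 0 1 0) + fscale k5 (poly5 0 0 0 0 1)"
      by (simp add: p poly5_scale poly5_add)
    also have "\<dots> \<in> F.span B5"
      by (intro F.span_add F.span_scale F.span_base) (auto simp: B5_def)
    finally show "p \<in> F.span B5" .
  qed
qed

lemma card_B5: "card B5 = 5"
proof -
  define xs where "xs = [poly5 1 0 0 0 0, poly5 0 1 0 0 0, poly5 0 0 1 0 0, poly5 0 0 0 1 0, poly5 0 0 0 0 1]"
  have "B5 = set xs" by (simp add: B5_def xs_def)
  moreover have "distinct xs"
    by (auto simp: xs_def dest!: poly5_inj)
  ultimately have "card B5 = length xs" by (metis distinct_card)
  then show ?thesis by (simp add: xs_def)
qed

lemma indep_B5: "\<not> F.dependent B5"
proof
  assume "F.dependent B5"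
  then obtain w where w: "\<exists>v\<in>B5. w v \<noteq> 0" and s: "(\<Sum>v\<in>B5. fscale (w v) v) = 0"
    using F.dependent_finite[of B5] by (auto simp: B5_def)
  define e1 where "e1 = poly5 1 0 0 0 0"
  define e2 where "e2 = poly5 0 1 0 0 0"
  define e3 where "e3 = poly5 0 0 1 0 0"
  define e4 where "e4 = poly5 0 0 0 1 0"
  define e5 where "e5 = poly5 0 0 0 0 1"
  have B: "B5 = {e1,e2,e3,e4,e5}" by (simp add: B5_def e1_def e2_def e3_def e4_def e5_def)
  have d: "e1 \<notin> {e2,e3,e4,e5}" "e2 \<notin> {e3,e4,e5}" "e3 \<notin> {e4,e5}" "e4 \<noteq> e5"
    by (auto simp: e1_def e2_def e3_def e4_def e5_def dest!: poly5_inj)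
  have "(\<Sum>v\<in>B5. fscale (w v) v) = fscale (w e1) e1 + (fscale (w e2) e2 + (fscale (w e3) e3 + (fscale (w e4) e4 + fscale (w e5) e5)))"
    unfolding B using d by (simp add: sum.insert)
  also have "\<dots> = poly5 (w e1) (w e2) (w e3) (w e4) (w e5)"
    by (simp add: e1_def e2_def e3_def e4_def e5_def poly5_scale poly5_add)
  finally have "poly5 (w e1) (w e2) (w e3) (w e4) (w e5) = poly5 0 0 0 0 0" using s poly5_zero by simp
  from poly5_inj[OF this] w show False by (auto simp: B)
qed

lemma dim_Q: "F.dim Q = 5"
  using F.dim_span_eq_card_independent[OF indep_B5] span_B5 card_B5 by simp



definition crs :: "real \<times> real \<times> real \<Rightarrow> real \<times> real \<times> real \<Rightarrow> real \<times> real \<times> real" where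
  "crs p q = (case p of (a1,a2,a3) \<Rightarrow> case q of (b1,b2,b3) \<Rightarrow> (a2 * b3 - a3 * b2, a3 * b1 - a1 * b3, a1 * b2 - a2 * b1))"

lemma par3:
  fixes p q :: "real \<times> real \<times> real"
  assumes "crs p q = 0" "p \<noteq> 0"
  shows "\<exists>t. q = t *\<^sub>R p"
proof -
  obtain a1 a2 a3 where p: "p = (a1,a2,a3)" by (cases p) auto
  obtain b1 b2 b3 where q: "q = (b1,b2,b3)" by (cases q) auto
  have c: "a2 * b3 = a3 * b2" "a3 * b1 = a1 * b3" "a1 * b2 = a2 * b1"
    using assms(1) by (auto simp: crs_def p q zero_prod_def)
  have nz: "a1 \<noteq> 0 \<or> a2 \<noteq> 0 \<or> a3 \<noteq> 0" using assms(2) by (auto simp: p zero_prod_def)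
  show ?thesis
  proof (cases "a1 \<noteq> 0")
    case True
    show ?thesis
      by (rule exI[of _ "b1 / a1"]) (use True c in \<open>auto simp: p q field_simps\<close>)
  next
    case F1: False
    show ?thesis
    proof (cases "a2 \<noteq> 0")
      case True
      show ?thesis
        by (rule exI[of _ "b2 / a2"]) (use True c in \<open>auto simp: p q field_simps\<close>)
    next
      case False
      with F1 nz have "a3 \<noteq> 0" by auto
      then show ?thesis
        by (intro exI[of _ "b3 / a3"]) (use c in \<open>auto simp: p q field_simps\<close>)
    qed
  qed
qed

lemma perp1:
  fixes v :: "real \<times> real \<times> real"
  shows "\<exists>c. c \<noteq> 0 \<and> inner c v = 0"
proof -
  obtain v1 v2 v3 where v: "v = (v1,v2,v3)" by (cases v) auto
  show ?thesis
  proof (cases "v1 = 0 \<and> v2 = 0")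
    case True
    then show ?thesis by (intro exI[of _ "(1,0,0)"]) (auto simp: v zero_prod_def)
  next
    case False
    then show ?thesis by (intro exI[of _ "(v2, - v1, (0::real))"]) (auto simp: v algebra_simps zero_prod_def)
  qed
qed

lemma orth2:
  fixes u v :: "real \<times> real \<times> real"
  shows "\<exists>c. c \<noteq> 0 \<and> inner c u = 0 \<and> inner c v = 0"
proof (cases "crs u v = 0")
  case False
  obtain u1 u2 u3 where u: "u = (u1,u2,u3)" by (cases u) auto
  obtain v1 v2 v3 where v: "v = (v1,v2,v3)" by (cases v) auto
  show ?thesis
    by (rule exI[of _ "crs u v"]) (use False in \<open>auto simp: crs_def u v algebra_simps\<close>)
next
  case True
  show ?thesis
  proof (cases "u = 0")
    case True
    then show ?thesis using perp1[of v] by auto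
  next
    case False
    with par3[OF \<open>crs u v = 0\<close>] obtain t where "v = t *\<^sub>R u" by blast
    then show ?thesis using perp1[of u] by (auto simp: inner_scaleR_right)
  qed
qed

lemma group2:
  fixes r1 r2 :: "real \<times> real \<times> real"
  assumes "crs r1 r2 = 0"
  shows "\<exists>u t1 t2. r1 = t1 *\<^sub>R u \<and> r2 = t2 *\<^sub>R u"
proof (cases "r1 = 0")
  case True
  then show ?thesis by (intro exI[of _ r2] exI[of _ 0] exI[of _ 1]) auto
next
  case False
  with par3[OF assms] obtain t where "r2 = t *\<^sub>R r1" by blast
  then show ?thesis by (intro exI[of _ r1] exI[of _ 1] exI[of _ t]) auto
qed

lemma group3:
  fixes r3 r4 r5 :: "real \<times> real \<times> real"
  assumes "crs r3 r4 = 0" "crs r3 r5 = 0" "crs r4 r5 = 0"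
  shows "\<exists>u t3 t4 t5. r3 = t3 *\<^sub>R u \<and> r4 = t4 *\<^sub>R u \<and> r5 = t5 *\<^sub>R u"
proof (cases "r3 = 0")
  case False
  with par3[OF assms(1)] par3[OF assms(2)] obtain t4 t5 where "r4 = t4 *\<^sub>R r3" "r5 = t5 *\<^sub>R r3" by blast
  then show ?thesis by (intro exI[of _ r3] exI[of _ 1] exI[of _ t4] exI[of _ t5]) auto
next
  case True
  with group2[OF assms(3)] obtain u t4 t5 where "r4 = t4 *\<^sub>R u" "r5 = t5 *\<^sub>R u" by blast
  with True show ?thesis by (intro exI[of _ u] exI[of _ 0] exI[of _ t4] exI[of _ t5]) auto
qed

lemma alg5:
  fixes r1 r2 r3 r4 r5 :: "real \<times> real \<times> real"
  assumes "crs r1 r2 = 0" "crs r3 r4 = 0" "crs r3 r5 = 0" "crs r4 r5 = 0"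
  shows "\<exists>c. c \<noteq> 0 \<and> inner c r1 = 0 \<and> inner c r2 = 0 \<and> inner c r3 = 0 \<and> inner c r4 = 0 \<and> inner c r5 = 0"
proof -
  obtain u t1 t2 where 1: "r1 = t1 *\<^sub>R u" "r2 = t2 *\<^sub>R u" using group2[OF assms(1)] by blast
  obtain w t3 t4 t5 where 2: "r3 = t3 *\<^sub>R w" "r4 = t4 *\<^sub>R w" "r5 = t5 *\<^sub>R w" using group3[OF assms(2-4)] by blast
  obtain c where "c \<noteq> 0" "inner c u = 0" "inner c w = 0" using orth2[of u w] by blast
  then show ?thesis by (intro exI[of _ c]) (auto simp: 1 2 inner_scaleR_right)
qed



lemma quad_fin:
  fixes a b c :: real
  assumes "a \<noteq> 0 \<or> b \<noteq> 0 \<or> c \<noteq> 0"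
  shows "finite {y. a + b * y + c * y^2 = 0}"
proof -
  have "[:a, b, c:] \<noteq> 0" using assms by auto
  then have "finite {y. poly [:a, b, c:] y = 0}" by (rule poly_roots_finite)
  moreover have "poly [:a, b, c:] y = a + b * y + c * y^2" for y
    by (simp add: algebra_simps power2_eq_square)
  moreover have "{y. a + b * y + c * y^2 = 0} = {y. poly [:a, b, c:] y = 0}"
    by (auto simp: algebra_simps power2_eq_square)
  ultimately show ?thesis by simp
qed

lemma gen_null:
  fixes a0 a1 a2 b0 b1 c2 :: real
  assumes nz: "a0 \<noteq> 0 \<or> a1 \<noteq> 0 \<or> a2 \<noteq> 0 \<or> b0 \<noteq> 0 \<or> b1 \<noteq> 0 \<or> c2 \<noteq> 0"
  shows "AE z in lborel. (a0 + a1 * fst z + a2 * (fst z)^2) + (b0 + b1 * fst z) * snd z + c2 * (snd z)^2 \<noteq> 0"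
proof -
  define P where "P = (\<lambda>x y::real. (a0 + a1 * x + a2 * x^2) + (b0 + b1 * x) * y + c2 * y^2 \<noteq> 0)"
  define E where "E = {x. a0 + a1 * x + a2 * x^2 = 0 \<and> b0 + b1 * x = 0 \<and> c2 = 0}"
  have finE: "finite E"
  proof (cases "c2 = 0")
    case False then show ?thesis by (simp add: E_def)
  next
    case c: True
    show ?thesis
    proof (cases "b0 = 0 \<and> b1 = 0")
      case False
      then have "finite {x. b0 + b1 * x + 0 * x^2 = 0}" by (intro quad_fin) auto
      then show ?thesis by (rule rev_finite_subset) (auto simp: E_def)
    next
      case True
      with c nz have "finite {x. a0 + a1 * x + a2 * x^2 = 0}" by (intro quad_fin) auto
      then show ?thesis by (rule rev_finite_subset) (auto simp: E_def)
    qed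
  qed
  have "AE x in lborel. AE y in lborel. P x y"
  proof (rule AE_I'[OF finite_imp_null_set_lborel[OF finE]])
    show "{x \<in> space lborel. \<not> (AE y in lborel. P x y)} \<subseteq> E"
    proof (rule subsetI, rule ccontr)
      fix x assume xx: "x \<in> {x \<in> space lborel. \<not> (AE y in lborel. P x y)}" and nE: "x \<notin> E"
      have "finite {y. (a0 + a1 * x + a2 * x^2) + (b0 + b1 * x) * y + c2 * y^2 = 0}"
        using nE by (intro quad_fin) (auto simp: E_def)
      then have "AE y in lborel. P x y"
        by (rule AE_I'[OF finite_imp_null_set_lborel]) (auto simp: P_def)
      with xx show False by simp
    qed
  qed
  then have "AE z in lborel \<Otimes>\<^sub>M lborel. P (fst z) (snd z)"
  proof -
    have meas: "{x \<in> space (lborel \<Otimes>\<^sub>M lborel). P (fst x) (snd x)} \<in> sets (lborel \<Otimes>\<^sub>M lborel)"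
      unfolding P_def by measurable
    show ?thesis using lborel_pair.AE_pair_iff[OF meas] \<open>AE x in lborel. AE y in lborel. P x y\<close> by simp
  qed
  then show ?thesis unfolding P_def by (simp only: lborel_prod)
qed



definition pv :: "(nat \<Rightarrow> real) \<Rightarrow> real \<times> real \<Rightarrow> real" where
  "pv K = poly5 (K 1) (K 2) (K 3) (K 4) (K 5)"

definition mnr :: "(nat \<Rightarrow> real) \<Rightarrow> (nat \<Rightarrow> real) \<Rightarrow> real \<Rightarrow> real \<Rightarrow> real" where
  "mnr K L x y = (K 1 + x * K 3 + y * K 4 / 2) * (L 2 + x * L 4 / 2 + y * L 5)
     - (K 2 + x * K 4 / 2 + y * K 5) * (L 1 + x * L 3 + y * L 4 / 2)"

definition cnd :: "(nat \<Rightarrow> real) \<Rightarrow> (nat \<Rightarrow> real) \<Rightarrow> bool" where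
  "cnd K L \<longleftrightarrow> K 1 * L 2 - K 2 * L 1 \<noteq> 0 \<or> K 3 * L 4 - K 4 * L 3 \<noteq> 0 \<or> K 3 * L 5 - K 5 * L 3 \<noteq> 0
     \<or> K 4 * L 5 - K 5 * L 4 \<noteq> 0"

lemma mnr_AE:
  assumes "cnd K L"
  shows "AE z in lborel. mnr K L (fst z) (snd z) \<noteq> 0"
proof -
  have "AE z in lborel. ((K 1 * L 2 - K 2 * L 1) + (K 1 * L 4 / 2 + K 3 * L 2 - K 2 * L 3 - K 4 * L 1 / 2) * fst z
     + (K 3 * L 4 / 2 - K 4 * L 3 / 2) * (fst z)^2)
     + ((K 1 * L 5 + K 4 * L 2 / 2 - K 2 * L 4 / 2 - K 5 * L 1) + (K 3 * L 5 - K 5 * L 3) * fst z) * snd z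
     + (K 4 * L 5 / 2 - K 5 * L 4 / 2) * (snd z)^2 \<noteq> 0"
    by (rule gen_null) (use assms in \<open>auto simp: cnd_def\<close>)
  moreover have "mnr K L x y = ((K 1 * L 2 - K 2 * L 1) + (K 1 * L 4 / 2 + K 3 * L 2 - K 2 * L 3 - K 4 * L 1 / 2) * x
     + (K 3 * L 4 / 2 - K 4 * L 3 / 2) * x^2)
     + ((K 1 * L 5 + K 4 * L 2 / 2 - K 2 * L 4 / 2 - K 5 * L 1) + (K 3 * L 5 - K 5 * L 3) * x) * y
     + (K 4 * L 5 / 2 - K 5 * L 4 / 2) * y^2" for x y
    by (simp add: mnr_def algebra_simps power2_eq_square)
  ultimately show ?thesis by simp
qed

lemma pair_exists:
  fixes F G H :: "nat \<Rightarrow> real"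
  assumes ind: "\<And>a b c. (\<forall>i\<in>{1,2,3,4,5::nat}. a * F i + b * G i + c * H i = 0) \<Longrightarrow> a = 0 \<and> b = 0 \<and> c = 0"
  shows "cnd F G \<or> cnd F H \<or> cnd G H"
proof (rule ccontr)
  assume "\<not> ?thesis"
  then have n: "\<not> cnd F G" "\<not> cnd F H" "\<not> cnd G H" by auto
  define r where "r = (\<lambda>i. (F i, G i, H i))"
  have c: "crs (r 1) (r 2) = 0" "crs (r 3) (r 4) = 0" "crs (r 3) (r 5) = 0" "crs (r 4) (r 5) = 0"
    using n by (auto simp: cnd_def crs_def r_def zero_prod_def algebra_simps)
  obtain cc where cc: "cc \<noteq> 0" "inner cc (r 1) = 0" "inner cc (r 2) = 0" "inner cc (r 3) = 0"
    "inner cc (r 4) = 0" "inner cc (r 5) = 0"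
    using alg5[OF c] by blast
  obtain a b d where abd: "cc = (a,b,d)" by (cases cc) auto
  have "\<forall>i\<in>{1,2,3,4,5::nat}. a * F i + b * G i + d * H i = 0"
    using cc(2-6) by (auto simp: abd r_def)
  from ind[OF this] cc(1) show False by (simp add: abd zero_prod_def)
qed

lemma solve:
  fixes K L :: "nat \<Rightarrow> real"
  assumes D: "mnr K L x y \<noteq> 0" and xy: "x \<noteq> 0 \<or> y \<noteq> 0"
  shows "\<exists>c0 c1 c2 c3 la mu. poly5 k1 k2 k3 k4 k5 =
     pi12 (taylor2 (x,y) (cub c0 c1 c2 c3)) + (fscale la (pv K) + fscale mu (pv L))"
proof -
  define PK where "PK = K 1 + x * K 3 + y * K 4 / 2"
  define RK where "RK = K 2 + x * K 4 / 2 + y * K 5"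
  define PL where "PL = L 1 + x * L 3 + y * L 4 / 2"
  define RL where "RL = L 2 + x * L 4 / 2 + y * L 5"
  define Pt where "Pt = k1 + x * k3 + y * k4 / 2"
  define Rt where "Rt = k2 + x * k4 / 2 + y * k5"
  define dd where "dd = mnr K L x y"
  have dd: "dd = PK * RL - RK * PL" by (simp add: dd_def mnr_def PK_def RK_def PL_def RL_def)
  define la where "la = (Pt * RL - Rt * PL) / dd"
  define mu where "mu = (PK * Rt - RK * Pt) / dd"
  have Dd: "dd \<noteq> 0" using D by (simp add: dd_def)
  have "la * PK + mu * PL = ((Pt * RL - Rt * PL) * PK + (PK * Rt - RK * Pt) * PL) / dd"
    by (simp add: la_def mu_def add_divide_distrib)
  also have "\<dots> = Pt * dd / dd" by (simp add: dd algebra_simps)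
  finally have e1: "la * PK + mu * PL = Pt" using Dd by simp
  have "la * RK + mu * RL = ((Pt * RL - Rt * PL) * RK + (PK * Rt - RK * Pt) * RL) / dd"
    by (simp add: la_def mu_def add_divide_distrib)
  also have "\<dots> = Rt * dd / dd" by (simp add: dd algebra_simps)
  finally have e2: "la * RK + mu * RL = Rt" using Dd by simp
  define t1 where "t1 = k1 - la * K 1 - mu * L 1"
  define t2 where "t2 = k2 - la * K 2 - mu * L 2"
  define t3 where "t3 = k3 - la * K 3 - mu * L 3"
  define t4 where "t4 = k4 - la * K 4 - mu * L 4"
  define t5 where "t5 = k5 - la * K 5 - mu * L 5"
  have "t1 + x * t3 + y * t4 / 2 = Pt - (la * PK + mu * PL)"
    by (simp add: t1_def t3_def t4_def PK_def PL_def Pt_def field_simps)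
  then have k1: "t1 + x * t3 + y * t4 / 2 = 0" using e1 by simp
  have "t2 + x * t4 / 2 + y * t5 = Rt - (la * RK + mu * RL)"
    by (simp add: t2_def t4_def t5_def RK_def RL_def Rt_def field_simps)
  then have k2: "t2 + x * t4 / 2 + y * t5 = 0" using e2 by simp
  have "\<exists>c0 c1 c2 c3. 3 * x * c3 + y * c2 = t3 \<and> 2 * x * c2 + 2 * y * c1 = t4 \<and> x * c1 + 3 * y * c0 = t5"
  proof (cases "x = 0")
    case False
    show ?thesis
      by (rule exI[of _ 0], rule exI[of _ "t5 / x"], rule exI[of _ "(t4 - 2 * y * (t5 / x)) / (2 * x)"],
          rule exI[of _ "(t3 - y * ((t4 - 2 * y * (t5 / x)) / (2 * x))) / (3 * x)"])
        (use False in \<open>simp add: field_simps\<close>)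
  next
    case True
    with xy have y: "y \<noteq> 0" by simp
    show ?thesis
      by (rule exI[of _ "t5 / (3 * y)"], rule exI[of _ "t4 / (2 * y)"], rule exI[of _ "t3 / y"], rule exI[of _ 0])
        (use True y in \<open>simp add: field_simps\<close>)
  qed
  then obtain c0 c1 c2 c3 where c: "3 * x * c3 + y * c2 = t3" "2 * x * c2 + 2 * y * c1 = t4" "x * c1 + 3 * y * c0 = t5"
    by blast
  have q1: "- 3 * x^2 * c3 - 2 * x * y * c2 - y^2 * c1 = t1"
  proof -
    have "- 3 * x^2 * c3 - 2 * x * y * c2 - y^2 * c1 = - x * (3 * x * c3 + y * c2) - y * (2 * x * c2 + 2 * y * c1) / 2"
      by (simp add: algebra_simps power2_eq_square)
    also have "\<dots> = t1" using c k1 by (simp add: algebra_simps)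
    finally show ?thesis .
  qed
  have q2: "- (x^2) * c2 - 2 * x * y * c1 - 3 * y^2 * c0 = t2"
  proof -
    have "- (x^2) * c2 - 2 * x * y * c1 - 3 * y^2 * c0 = - x * (2 * x * c2 + 2 * y * c1) / 2 - y * (x * c1 + 3 * y * c0)"
      by (simp add: algebra_simps power2_eq_square)
    also have "\<dots> = t2" using c k2 by (simp add: algebra_simps)
    finally show ?thesis .
  qed
  have "pi12 (taylor2 (x,y) (cub c0 c1 c2 c3)) + (fscale la (pv K) + fscale mu (pv L)) = poly5 k1 k2 k3 k4 k5"
    unfolding pi_taylor_cub pv_def poly5_scale poly5_add q1 q2 c
    by (simp add: t1_def t2_def t3_def t4_def t5_def)
  then show ?thesis by metis
qed

lemma good_dim:
  assumes V: "V \<subseteq> Q" "pv K \<in> V" "pv L \<in> V" and D: "mnr K L (fst \<xi>) (snd \<xi>) \<noteq> 0" and nz: "\<xi> \<noteq> 0"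
  shows "F.dim ((\<lambda>p. pi12 (taylor2 \<xi> p)) ` S 3 + F.span V) = 5"
proof -
  obtain x y where xi: "\<xi> = (x,y)" by (cases \<xi>) auto
  have xy: "x \<noteq> 0 \<or> y \<noteq> 0" using nz by (auto simp: xi zero_prod_def)
  have spQ: "F.span V \<subseteq> Q" by (rule F.span_minimal[OF V(1) subspace_Q])
  have "(\<lambda>p. pi12 (taylor2 \<xi> p)) ` S 3 + F.span V = Q"
  proof
    show "(\<lambda>p. pi12 (taylor2 \<xi> p)) ` S 3 + F.span V \<subseteq> Q"
    proof
      fix z assume "z \<in> (\<lambda>p. pi12 (taylor2 \<xi> p)) ` S 3 + F.span V"
      then obtain a b where z: "z = a + b" and a: "a \<in> (\<lambda>p. pi12 (taylor2 \<xi> p)) ` S 3" and b: "b \<in> F.span V"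
        by (auto elim!: set_plus_elim)
      from a obtain c0 c1 c2 c3 where "a = pi12 (taylor2 (x,y) (cub c0 c1 c2 c3))"
        by (auto simp: S3_eq xi)
      then have aQ: "a \<in> Q" unfolding Q_def pi_taylor_cub by blast
      show "z \<in> Q" using F.subspace_add[OF subspace_Q aQ] b spQ z by auto
    qed
    show "Q \<subseteq> (\<lambda>p. pi12 (taylor2 \<xi> p)) ` S 3 + F.span V"
    proof
      fix t assume "t \<in> Q"
      then obtain k1 k2 k3 k4 k5 where t: "t = poly5 k1 k2 k3 k4 k5" by (auto simp: Q_def)
      obtain c0 c1 c2 c3 la mu where e: "poly5 k1 k2 k3 k4 k5 =
          pi12 (taylor2 (x,y) (cub c0 c1 c2 c3)) + (fscale la (pv K) + fscale mu (pv L))"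
        using solve[OF D[unfolded xi fst_conv snd_conv] xy] by blast
      have "pi12 (taylor2 (x,y) (cub c0 c1 c2 c3)) \<in> (\<lambda>p. pi12 (taylor2 \<xi> p)) ` S 3"
        unfolding xi by (intro imageI) (auto simp: S3_eq)
      moreover have "fscale la (pv K) + fscale mu (pv L) \<in> F.span V"
        by (intro F.span_add F.span_scale F.span_base V)
      ultimately show "t \<in> (\<lambda>p. pi12 (taylor2 \<xi> p)) ` S 3 + F.span V"
        unfolding t e by (rule set_plus_intro)
    qed
  qed
  then show ?thesis using dim_Q by simp
qed

lemma Q_pv: "p \<in> Q \<Longrightarrow> \<exists>K. p = pv K"
proof -
  assume "p \<in> Q"
  then obtain k1 k2 k3 k4 k5 where p: "p = poly5 k1 k2 k3 k4 k5" by (auto simp: Q_def)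
  show ?thesis
    by (rule exI[of _ "\<lambda>i. if i = 1 then k1 else if i = 2 then k2 else if i = 3 then k3 else if i = 4 then k4 else k5"])
       (simp add: p pv_def)
qed

theorem lemma7p4:
  fixes f g h :: "real \<times> real \<Rightarrow> real"
  assumes "f \<in> S12" and "g \<in> S12" and "h \<in> S12"
    and "distinct [f, g, h]"
    and "\<not> module.dependent fscale {f, g, h}"
  shows "AE \<xi> in lborel.
           vector_space.dim fscale
             ((\<lambda>p. pi12 (taylor2 \<xi> p)) ` S 3 + module.span fscale {f, g, h}) = 5"
proof -
  have VQ: "{f, g, h} \<subseteq> Q" using assms(1-3) S12_sub by (auto simp: Q_def)
  obtain FF where f: "f = pv FF" using Q_pv VQ by blast
  obtain GG where g: "g = pv GG" using Q_pv VQ by blast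
  obtain HH where h: "h = pv HH" using Q_pv VQ by blast
  have dis: "f \<noteq> g" "f \<noteq> h" "g \<noteq> h" using assms(4) by auto
  have ind: "a = 0 \<and> b = 0 \<and> c = 0" if hyp: "\<forall>i\<in>{1,2,3,4,5::nat}. a * FF i + b * GG i + c * HH i = 0" for a b c
  proof (rule ccontr)
    assume nz: "\<not> (a = 0 \<and> b = 0 \<and> c = 0)"
    define u where "u = (\<lambda>v. if v = f then a else if v = g then b else c)"
    have "(\<Sum>v\<in>{f,g,h}. fscale (u v) v) = fscale a f + (fscale b g + fscale c h)"
      using dis by (simp add: u_def)
    also have "\<dots> = 0"
      using hyp by (simp add: f g h pv_def poly5_scale poly5_add poly5_zero algebra_simps)
    finally have s0: "(\<Sum>v\<in>{f,g,h}. fscale (u v) v) = 0" .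
    have ex: "\<exists>v\<in>{f,g,h}. u v \<noteq> 0" using nz dis by (auto simp: u_def)
    have fin: "finite {f,g,h}" by simp
    have "F.dependent {f,g,h}" using F.dependent_finite[OF fin] s0 ex by blast
    with assms(5) show False by simp
  qed
  have A0: "AE z in lborel. (z :: real \<times> real) \<noteq> 0"
    by (rule AE_I'[OF finite_imp_null_set_lborel[of "{0}"]]) auto
  have key: "AE \<xi> in lborel. F.dim ((\<lambda>p. pi12 (taylor2 \<xi> p)) ` S 3 + F.span {f, g, h}) = 5"
    if "pv K \<in> {f,g,h}" "pv L \<in> {f,g,h}" "cnd K L" for K L
  proof -
    have "AE z in lborel. mnr K L (fst z) (snd z) \<noteq> 0" by (rule mnr_AE) fact
    with A0 show ?thesis
      by eventually_elim (rule good_dim[OF VQ that(1,2)], auto)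
  qed
  have "cnd FF GG \<or> cnd FF HH \<or> cnd GG HH" by (rule pair_exists) (rule ind)
  then show ?thesis
    by (elim disjE) (rule key; simp add: f g h)+
qed

end
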